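(* Let $d$ be a positive integer and let $X=\{X_k:k\in\mathbb{Z}^d\}$ be a centered, complex-valued, weakly stationary random field such that $\varrho'(X,n)\to 0$ as $n\to\infty$, and let $f$ denote its (continuous) spectral density, writing $f(\lambda):=f(e^{i\lambda})$. Let $\{v^{(n)}\}_{n=1}^\infty$ be a sequence of vectors in $\mathbb{N}^d$ with $\lim_{n\to\infty}\min\{v^{(n)}_1,\dots,v^{(n)}_d\}=\infty$. Then \[\lim_{n\to\infty} E\, I_n^{(\lambda)}=f(\lambda)\quad\text{for all }\lambda\in(-\pi,\pi]^d,\] and this convergence is uniform over all $\lambda\in(-\pi,\pi]^d$.
   Context: A random field $X=\{X_k:k\in\mathbb{Z}^d\}$ is a collection of complex random variables indexed by $\mathbb{Z}^d$; it is centered if $EX_k=0$ for all $k$. It is weakly stationary if $E|X_k|^2=\sigma^2<\infty$ for all $k$, $EX_k$ is constant, and $E(X_k-\mu)\overline{(X_j-\mu)}$ depends only on $k-j$. For $\sigma$-fields $\mathcal A,\mathcal B$, $\varrho(\mathcal A,\mathcal B)=\sup \mathrm{Corr}(f,g)$ over real $f\in L^2(\mathcal A)$, $g\in L^2(\mathcal B)$. For $n\ge1$, $\varrho'(X,n)=\sup_{S,T}\varrho(\sigma(X_k:k\in S),\sigma(X_k:k\in T))$, the supremum over finite nonempty $S,T\subset\mathbb{Z}^d$ for which there is a coordinate $u\in\{1,\dots,d\}$ with $|k_u-l_u|\ge n$ for all $k\in S$, $l\in T$ (the sets may be interlaced). A nonnegative Borel function $f$ on the torus $\mathbb{T}^d$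 is the spectral density of $X$ if $EX_k\overline{X_j}=\int_{\mathbb{T}^d}e^{i(k-j)\cdot\theta}f(e^{i\theta})\,dm^d(e^{i\theta})$, where $m^d$ is normalized Lebesgue (Haar) measure on $\mathbb{T}^d$; such fields with $\varrho'(X,n)\to0$ have a continuous spectral density. For $\lambda\in(-\pi,\pi]^d$, $X_k^{(\lambda)}:=e^{-ik\cdot\lambda}X_k$. For $v\in\mathbb{N}^d$, the box $\mathfrak B(v)=\{w\in\mathbb{N}^d:1\le w_j\le v_j,\ j=1,\dots,d\}$; $\mathfrak B_n:=\mathfrak B(v^{(n)})$, $V^{(n)}:=\prod_{j=1}^d v_j^{(n)}$, $S_n^{(\lambda)}:=\sum_{k\in\mathfrak B_n}X_k^{(\lambda)}$, and the periodogram is $I_n^{(\lambda)}:=|S_n^{(\lambda)}|^2/V^{(n)}$. *)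

theory Defs
  imports "HOL-Probability.Probability"
begin

text \<open>Random fields indexed by integer lattice points of dimension CARD('d),
  represented as int^'d.  Expectations are Bochner integrals w.r.t. M.\<close>

definition centered :: "'a measure \<Rightarrow> (int^'d \<Rightarrow> 'a \<Rightarrow> complex) \<Rightarrow> bool" where
  "centered M X \<longleftrightarrow> (\<forall>k. integrable M (X k) \<and> integral\<^sup>L M (X k) = 0)"

definition weakly_stationary :: "'a measure \<Rightarrow> (int^'d \<Rightarrow> 'a \<Rightarrow> complex) \<Rightarrow> bool" where
  "weakly_stationary M X \<longleftrightarrow>
     (\<forall>k. X k \<in> borel_measurable M \<and> integrable M (\<lambda>\<omega>. (cmod (X k \<omega>))\<^sup>2)) \<and>
     (\<exists>\<sigma>2. \<forall>k. integral\<^sup>L M (\<lambda>\<omega>. (cmod (X k \<omega>))\<^sup>2) = \<sigma>2) \<and>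
     (\<exists>\<mu>. (\<forall>k. integral\<^sup>L M (X k) = \<mu>) \<and>
        (\<forall>k j k' j'. k - j = k' - j' \<longrightarrow>
            integral\<^sup>L M (\<lambda>\<omega>. (X k \<omega> - \<mu>) * cnj (X j \<omega> - \<mu>))
          = integral\<^sup>L M (\<lambda>\<omega>. (X k' \<omega> - \<mu>) * cnj (X j' \<omega> - \<mu>))))"

definition gen_sigma :: "'a measure \<Rightarrow> (int^'d \<Rightarrow> 'a \<Rightarrow> complex) \<Rightarrow> (int^'d) set \<Rightarrow> 'a measure" where
  "gen_sigma M X S = sigma (space M) {X k -` B \<inter> space M | k B. k \<in> S \<and> B \<in> sets borel}"

definition corr :: "'a measure \<Rightarrow> ('a \<Rightarrow> real) \<Rightarrow> ('a \<Rightarrow> real) \<Rightarrow> real" where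
  "corr M f g =
     (integral\<^sup>L M (\<lambda>x. f x * g x) - integral\<^sup>L M f * integral\<^sup>L M g) /
     sqrt ((integral\<^sup>L M (\<lambda>x. (f x)\<^sup>2) - (integral\<^sup>L M f)\<^sup>2) *
           (integral\<^sup>L M (\<lambda>x. (g x)\<^sup>2) - (integral\<^sup>L M g)\<^sup>2))"

definition L2_nonconst :: "'a measure \<Rightarrow> 'a measure \<Rightarrow> ('a \<Rightarrow> real) set" where
  "L2_nonconst M A = {f. f \<in> borel_measurable A \<and> integrable M (\<lambda>x. (f x)\<^sup>2) \<and>
       integral\<^sup>L M (\<lambda>x. (f x)\<^sup>2) - (integral\<^sup>L M f)\<^sup>2 > 0}"

definition max_corr :: "'a measure \<Rightarrow> 'a measure \<Rightarrow> 'a measure \<Rightarrow> real" where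
  "max_corr M A B = Sup (insert 0 {corr M f g | f g. f \<in> L2_nonconst M A \<and> g \<in> L2_nonconst M B})"

definition rho' :: "'a measure \<Rightarrow> (int^'d \<Rightarrow> 'a \<Rightarrow> complex) \<Rightarrow> nat \<Rightarrow> real" where
  "rho' M X n = Sup (insert 0 {max_corr M (gen_sigma M X S) (gen_sigma M X T) | S T.
      finite S \<and> S \<noteq> {} \<and> finite T \<and> T \<noteq> {} \<and>
      (\<exists>u. \<forall>k\<in>S. \<forall>l\<in>T. int n \<le> \<bar>k $ u - l $ u\<bar>)})"

definition torus_pt :: "real^'d \<Rightarrow> complex^'d" where
  "torus_pt \<theta> = (\<chi> i. exp (\<i> * complex_of_real (\<theta> $ i)))"

definition torus :: "(complex^'d) set" where
  "torus = {z. \<forall>i. cmod (z $ i) = 1}"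

definition ldot :: "int^'d \<Rightarrow> real^'d \<Rightarrow> real" where
  "ldot k \<theta> = (\<Sum>i\<in>UNIV. real_of_int (k $ i) * \<theta> $ i)"

definition cube :: "(real^'d) set" where
  "cube = {\<theta>. \<forall>i. - pi \<le> \<theta> $ i \<and> \<theta> $ i \<le> pi}"

text \<open>f is a spectral density of X; integration against normalized Haar measure on the
  torus is written as the integral over [-pi,pi]^d divided by (2 pi)^d.\<close>
definition spectral_density :: "'a measure \<Rightarrow> (int^'d \<Rightarrow> 'a \<Rightarrow> complex) \<Rightarrow> (complex^'d \<Rightarrow> real) \<Rightarrow> bool" where
  "spectral_density M X f \<longleftrightarrow>
     f \<in> borel_measurable borel \<and> (\<forall>z\<in>torus. 0 \<le> f z) \<and>
     set_integrable lborel (cube::(real^'d) set) (\<lambda>\<theta>. f (torus_pt \<theta>)) \<and>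
     (\<forall>k j. integral\<^sup>L M (\<lambda>\<omega>. X k \<omega> * cnj (X j \<omega>)) =
        (LINT \<theta>:cube|lborel. exp (\<i> * complex_of_real (ldot (k - j) \<theta>)) *
             complex_of_real (f (torus_pt \<theta>))) / complex_of_real ((2 * pi) ^ CARD('d)))"

definition box_set :: "nat^'d \<Rightarrow> (int^'d) set" where
  "box_set v = {w. \<forall>j. 1 \<le> w $ j \<and> w $ j \<le> int (v $ j)}"

definition periodogram :: "(int^'d \<Rightarrow> 'a \<Rightarrow> complex) \<Rightarrow> nat^'d \<Rightarrow> real^'d \<Rightarrow> 'a \<Rightarrow> real" where
  "periodogram X v lam \<omega> =
     (cmod (\<Sum>k\<in>box_set v. exp (- \<i> * complex_of_real (ldot k lam)) * X k \<omega>))\<^sup>2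
       / real (\<Prod>j\<in>UNIV. v $ j)"

end

theory Submission
  imports Defs
begin


lemma integral_lborel_prod:
  fixes f :: "'a::euclidean_space \<Rightarrow> real \<Rightarrow> complex"
  assumes int: "\<And>b. b\<in>Basis \<Longrightarrow> integrable lborel (f b)"
  shows "(\<integral>x. (\<Prod>b\<in>Basis. f b (x \<bullet> b)) \<partial>(lborel::'a measure)) = (\<Prod>b\<in>Basis. integral\<^sup>L lborel (f b))"
proof -
  interpret product_sigma_finite "\<lambda>_::'a. lborel::real measure" by standard
  have meas: "(\<lambda>x::'a. \<Prod>b\<in>Basis. f b (x \<bullet> b)) \<in> borel_measurable borel"
    using int by (auto intro!: borel_measurable_prod)
  have "(\<integral>x. (\<Prod>b\<in>Basis. f b (x \<bullet> b)) \<partial>(lborel::'a measure)) =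
     (\<integral>x. (\<Prod>b\<in>Basis. f b ((\<Sum>b'\<in>Basis. x b' *\<^sub>R b') \<bullet> b)) \<partial>(\<Pi>\<^sub>M b\<in>Basis. lborel))"
    apply (subst lborel_eq)
    apply (subst integral_distr)
      apply (auto intro!: meas)
    done
  also have "\<dots> = (\<integral>x. (\<Prod>b\<in>Basis. f b (x b)) \<partial>(\<Pi>\<^sub>M b\<in>(Basis::'a set). lborel))"
    apply (rule Bochner_Integration.integral_cong[OF refl])
    apply (rule prod.cong[OF refl])
    apply (simp add: inner_sum_left inner_Basis if_distrib sum.delta cong: if_cong)
    done
  also have "\<dots> = (\<Prod>b\<in>Basis. integral\<^sup>L lborel (f b))"
    by (rule product_integral_prod) (auto intro: int)
  finally show ?thesis .
qed


lemma exp_int_pi: "exp (\<i> * of_int n * of_real pi) = exp (- (\<i> * of_int n * of_real pi))"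
proof -
  have "exp (\<i> * of_int n * of_real pi) / exp (- (\<i> * of_int n * of_real pi)) = exp ((2 * of_int n * of_real pi) * \<i>)"
    by (simp add: exp_minus[symmetric] exp_diff[symmetric] algebra_simps)
  also have "\<dots> = 1" using exp_integer_2pi[of "of_int n"] by simp
  finally show ?thesis by (simp add: field_simps)
qed

lemma int1:
  "integral\<^sup>L lborel (\<lambda>t::real. indicator {-pi..pi} t *\<^sub>R exp (\<i> * of_int n * of_real t)) = (if n = 0 then 2*pi else 0)"
proof -
  have si: "set_integrable lborel {-pi..pi} (\<lambda>t::real. exp (\<i> * of_int n * of_real t))"
    unfolding set_integrable_def
    by (rule borel_integrable_compact) (auto intro!: continuous_intros)
  have "integral\<^sup>L lborel (\<lambda>t::real. indicator {-pi..pi} t *\<^sub>R exp (\<i> * of_int n * of_real t))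
     = integral {-pi..pi} (\<lambda>t::real. exp (\<i> * of_int n * of_real t))"
    using set_borel_integral_eq_integral(2)[OF si] by (simp add: set_lebesgue_integral_def)
  also have "\<dots> = (if n = 0 then 2*pi else 0)"
  proof (cases "n = 0")
    case True then show ?thesis by (simp add: scaleR_conv_of_real)
  next
    case False
    have "((\<lambda>t::real. exp (\<i> * of_int n * of_real t)) has_integral
       (exp (\<i> * of_int n * of_real pi) / (\<i> * of_int n) - exp (\<i> * of_int n * of_real (-pi)) / (\<i> * of_int n))) {-pi..pi}"
    proof (rule fundamental_theorem_of_calculus[where f = "\<lambda>t::real. exp (\<i> * of_int n * of_real t) / (\<i> * of_int n)"])
      fix t :: real
      have "((\<lambda>t::complex. exp (\<i> * of_int n * t) / (\<i> * of_int n)) has_field_derivative exp (\<i> * of_int n * of_real t)) (at (of_real t))"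
        using False by (auto intro!: derivative_eq_intros)
      from has_vector_derivative_real_field[OF this]
      show "((\<lambda>t. exp (\<i> * of_int n * of_real t) / (\<i> * of_int n)) has_vector_derivative exp (\<i> * of_int n * of_real t)) (at t within {-pi..pi})"
        by simp
    qed auto
    then show ?thesis using False exp_int_pi[of n] by (simp add: integral_unique)
  qed
  finally show ?thesis .
qed

lemma integral_lborel_vec_prod:
  fixes F :: "'d::finite \<Rightarrow> real \<Rightarrow> complex"
  assumes int: "\<And>j. integrable lborel (F j)"
  shows "(\<integral>x. (\<Prod>j\<in>UNIV. F j (x $ j)) \<partial>(lborel::(real^'d) measure)) = (\<Prod>j\<in>UNIV. integral\<^sup>L lborel (F j))"
proof -
  define idx where "idx b = (SOME j. b = (axis j 1::real^'d))" for b
  have idx: "idx (axis j 1) = j" for j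
    unfolding idx_def by (rule some_equality) (auto simp: axis_eq_axis)
  have B: "(Basis :: (real^'d) set) = (\<lambda>j. axis j 1) ` UNIV"
    by (auto simp: Basis_vec_def)
  have inj: "inj (\<lambda>j. axis j (1::real) :: real^'d)"
    by (auto simp: inj_def axis_eq_axis)
  have "(\<integral>x. (\<Prod>j\<in>UNIV. F j (x $ j)) \<partial>(lborel::(real^'d) measure)) =
        (\<integral>x. (\<Prod>b\<in>Basis. F (idx b) (x \<bullet> b)) \<partial>(lborel::(real^'d) measure))"
    by (simp add: B prod.reindex[OF inj] idx cart_eq_inner_axis)
  also have "\<dots> = (\<Prod>b\<in>(Basis :: (real^'d) set). integral\<^sup>L lborel (F (idx b)))"
    by (rule integral_lborel_prod) (rule int)
  also have "\<dots> = (\<Prod>j\<in>UNIV. integral\<^sup>L lborel (F j))"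
    by (simp add: B prod.reindex[OF inj] idx)
  finally show ?thesis .
qed

lemma cube_orth:
  "(LINT \<theta>:(cube::(real^'d::finite) set)|lborel. exp (\<i> * complex_of_real (ldot m \<theta>)))
     = (if m = 0 then (2*pi) ^ CARD('d) else 0)"
proof -
  have eq: "indicator cube \<theta> *\<^sub>R exp (\<i> * complex_of_real (ldot m \<theta>)) =
     (\<Prod>j\<in>UNIV. indicator {-pi..pi} (\<theta> $ j) *\<^sub>R exp (\<i> * of_int (m $ j) * of_real (\<theta> $ j)))" for \<theta> :: "real^'d"
  proof -
    have "indicator cube \<theta> = (\<Prod>j\<in>UNIV. indicator {-pi..pi} (\<theta> $ j) :: real)"
      by (auto simp: cube_def indicator_def prod_zero_iff)
    moreover have "exp (\<i> * complex_of_real (ldot m \<theta>)) = (\<Prod>j\<in>UNIV. exp (\<i> * of_int (m $ j) * of_real (\<theta> $ j)))"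
      by (simp add: ldot_def sum_distrib_left exp_sum algebra_simps)
    ultimately show ?thesis by (simp add: scaleR_conv_of_real prod.distrib)
  qed
  have "(LINT \<theta>:(cube::(real^'d::finite) set)|lborel. exp (\<i> * complex_of_real (ldot m \<theta>)))
     = (\<Prod>j\<in>UNIV. integral\<^sup>L lborel (\<lambda>t::real. indicator {-pi..pi} t *\<^sub>R exp (\<i> * of_int (m $ j) * of_real t)))"
    unfolding set_lebesgue_integral_def eq
    by (rule integral_lborel_vec_prod)
       (rule borel_integrable_compact, auto intro!: continuous_intros)
  also have "\<dots> = (\<Prod>j\<in>UNIV. (if m $ j = 0 then 2*pi else 0))"
    by (simp add: int1)
  also have "\<dots> = (if m = 0 then (2*pi) ^ CARD('d) else 0)"
    by (auto simp: vec_eq_iff prod_zero_iff)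
  finally show ?thesis .
qed


lemma card_vecset:
  fixes A :: "'d::finite \<Rightarrow> 'a set"
  assumes "\<And>j. finite (A j)"
  shows "finite {w::'a^'d. \<forall>j. w $ j \<in> A j}" "card {w::'a^'d. \<forall>j. w $ j \<in> A j} = (\<Prod>j\<in>UNIV. card (A j))"
proof -
  have eq: "{w::'a^'d. \<forall>j. w $ j \<in> A j} = vec_lambda ` (PiE UNIV A)"
  proof
    show "{w::'a^'d. \<forall>j. w $ j \<in> A j} \<subseteq> vec_lambda ` (PiE UNIV A)"
    proof
      fix w :: "'a^'d" assume "w \<in> {w::'a^'d. \<forall>j. w $ j \<in> A j}"
      then have "vec_nth w \<in> PiE UNIV A" by auto
      then show "w \<in> vec_lambda ` (PiE UNIV A)" by (intro image_eqI[of _ _ "vec_nth w"]) auto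
    qed
  qed auto
  have inj: "inj_on vec_lambda (PiE UNIV A)"
    by (auto simp: inj_on_def vec_lambda_inject)
  show "finite {w::'a^'d. \<forall>j. w $ j \<in> A j}" unfolding eq using assms by (auto intro!: finite_PiE)
  show "card {w::'a^'d. \<forall>j. w $ j \<in> A j} = (\<Prod>j\<in>UNIV. card (A j))"
    unfolding eq card_image[OF inj] by (simp add: card_PiE)
qed

lemma box_set_eq: "box_set v = {w. \<forall>j. w $ j \<in> {1..int (v $ j)}}"
  by (auto simp: box_set_def)

lemma finite_box_set: "finite (box_set v)"
  unfolding box_set_eq by (rule card_vecset) auto

lemma card_box_set: "card (box_set v) = (\<Prod>j\<in>UNIV. v $ j)"
  unfolding box_set_eq by (subst card_vecset) auto

definition ee :: "int^'d \<Rightarrow> real^'d \<Rightarrow> complex" where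
  "ee m \<theta> = exp (\<i> * complex_of_real (ldot m \<theta>))"

definition Jc :: "(real^'d::finite \<Rightarrow> complex) \<Rightarrow> complex" where
  "Jc h = integral\<^sup>L lborel (\<lambda>\<theta>. indicator cube \<theta> *\<^sub>R h \<theta>)"

definition Jr :: "(real^'d::finite \<Rightarrow> real) \<Rightarrow> real" where
  "Jr h = integral\<^sup>L lborel (\<lambda>\<theta>. indicator cube \<theta> * h \<theta>)"

definition Kr :: "nat^'d \<Rightarrow> real^'d \<Rightarrow> real^'d \<Rightarrow> real" where
  "Kr v lam \<theta> = (cmod (\<Sum>k\<in>box_set v. ee k (\<theta> - lam)))\<^sup>2 / real (\<Prod>j\<in>UNIV. v $ j)"

lemma ldot_add: "ldot (a + b) \<theta> = ldot a \<theta> + ldot b \<theta>"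
  by (simp add: ldot_def algebra_simps sum.distrib)
lemma ldot_diff: "ldot (a - b) \<theta> = ldot a \<theta> - ldot b \<theta>"
  by (simp add: ldot_def algebra_simps sum_subtractf)
lemma ldot_diff2: "ldot a (\<theta> - \<phi>) = ldot a \<theta> - ldot a \<phi>"
  by (simp add: ldot_def algebra_simps sum_subtractf)

lemma continuous_on_ldot[continuous_intros]:
  "continuous_on S (\<lambda>\<theta>. ldot k (h \<theta>))" if "continuous_on S h"
  unfolding ldot_def by (intro continuous_intros that)

lemma ee_add: "ee (a + b) \<theta> = ee a \<theta> * ee b \<theta>"
  by (simp add: ee_def ldot_add exp_add[symmetric] algebra_simps)
lemma ee_diff: "ee (a - b) \<theta> = ee a \<theta> * cnj (ee b \<theta>)"
  by (simp add: ee_def ldot_diff exp_cnj exp_diff exp_minus field_simps)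
lemma ee_shift: "ee k (\<theta> - lam) = ee k \<theta> * exp (- \<i> * complex_of_real (ldot k lam))"
  by (simp add: ee_def ldot_diff2 exp_add[symmetric] algebra_simps)

lemma continuous_on_ee[continuous_intros]: "continuous_on S h \<Longrightarrow> continuous_on S (\<lambda>\<theta>. ee k (h \<theta>))"
  unfolding ee_def by (intro continuous_intros)

lemma compact_cube: "compact (cube :: (real^'d::finite) set)"
proof -
  have "cube = cbox (\<chi> i. - pi) (\<chi> i. pi :: real^'d)"
    by (auto simp: cube_def mem_box_cart)
  then show ?thesis by (metis compact_cbox)
qed

lemma Jc_integrable: "continuous_on UNIV h \<Longrightarrow> integrable lborel (\<lambda>\<theta>. indicator cube \<theta> *\<^sub>R h \<theta>)"
  for h :: "real^'d::finite \<Rightarrow> complex"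
  by (rule borel_integrable_compact[OF compact_cube]) (rule continuous_on_subset, auto)

lemma Jr_integrable: "continuous_on UNIV h \<Longrightarrow> integrable lborel (\<lambda>\<theta>. indicator cube \<theta> * h \<theta>)"
  for h :: "real^'d::finite \<Rightarrow> real"
  using borel_integrable_compact[OF compact_cube, of h] continuous_on_subset[of UNIV h] by auto

lemma Kr_expand:
  "complex_of_real (Kr v lam \<theta>) = (\<Sum>k\<in>box_set v. \<Sum>j\<in>box_set v.
      exp (- \<i> * complex_of_real (ldot k lam)) * cnj (exp (- \<i> * complex_of_real (ldot j lam))) * ee (k - j) \<theta>)
      / complex_of_real (real (\<Prod>j\<in>UNIV. v $ j))"
proof -
  have "complex_of_real ((cmod (\<Sum>k\<in>box_set v. ee k (\<theta> - lam)))\<^sup>2) =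
     (\<Sum>k\<in>box_set v. ee k (\<theta> - lam)) * cnj (\<Sum>k\<in>box_set v. ee k (\<theta> - lam))"
    by (rule complex_norm_square)
  also have "\<dots> = (\<Sum>k\<in>box_set v. \<Sum>j\<in>box_set v. ee k (\<theta> - lam) * cnj (ee j (\<theta> - lam)))"
    by (simp add: sum_product)
  also have "\<dots> = (\<Sum>k\<in>box_set v. \<Sum>j\<in>box_set v.
      exp (- \<i> * complex_of_real (ldot k lam)) * cnj (exp (- \<i> * complex_of_real (ldot j lam))) * ee (k - j) \<theta>)"
    by (simp add: ee_shift ee_diff mult_ac)
  finally show ?thesis by (simp add: Kr_def)
qed

lemma continuous_on_Kr[continuous_intros]: "continuous_on S (Kr v lam)"
  unfolding Kr_def divide_inverse by (intro continuous_intros)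



abbreviation zz :: "int^'d \<Rightarrow> real^'d \<Rightarrow> complex" where
  "zz k lam \<equiv> exp (- \<i> * complex_of_real (ldot k lam))"

lemma integral_double_sum:
  fixes F :: "'i \<Rightarrow> 'j \<Rightarrow> 'a \<Rightarrow> complex"
  assumes "\<And>k j. integrable M (F k j)"
  shows "integral\<^sup>L M (\<lambda>x. \<Sum>k\<in>A. \<Sum>j\<in>B. c k j * F k j x) = (\<Sum>k\<in>A. \<Sum>j\<in>B. c k j * integral\<^sup>L M (F k j))"
proof -
  have i: "integrable M (\<lambda>x. \<Sum>j\<in>B. c k j * F k j x)" for k
    by (rule Bochner_Integration.integrable_sum, rule Bochner_Integration.integrable_mult_right, rule assms)
  show ?thesis
    by (simp add: Bochner_Integration.integral_sum[OF i] Bochner_Integration.integral_sum[OF Bochner_Integration.integrable_mult_right[OF assms]])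
qed

lemma Jc_Kr:
  fixes h :: "real^'d::finite \<Rightarrow> complex"
  assumes h: "continuous_on UNIV h"
  shows "Jc (\<lambda>\<theta>. complex_of_real (Kr v lam \<theta>) * h \<theta>) =
    (\<Sum>k\<in>box_set v. \<Sum>j\<in>box_set v. zz k lam * cnj (zz j lam) * Jc (\<lambda>\<theta>. ee (k - j) \<theta> * h \<theta>))
      / complex_of_real (real (\<Prod>j\<in>UNIV. v $ j))"
proof -
  let ?V = "complex_of_real (real (\<Prod>j\<in>UNIV. v $ j))"
  have pw: "indicator cube \<theta> *\<^sub>R (complex_of_real (Kr v lam \<theta>) * h \<theta>) =
     (\<Sum>k\<in>box_set v. \<Sum>j\<in>box_set v. zz k lam * cnj (zz j lam) * (indicator cube \<theta> *\<^sub>R (ee (k - j) \<theta> * h \<theta>))) / ?V"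
    for \<theta>
  proof -
    let ?i = "complex_of_real (indicator cube \<theta>)"
    have "indicator cube \<theta> *\<^sub>R (complex_of_real (Kr v lam \<theta>) * h \<theta>) =
      (\<Sum>k\<in>box_set v. \<Sum>j\<in>box_set v. zz k lam * cnj (zz j lam) * ee (k - j) \<theta>) * (?i * h \<theta>) / ?V"
      unfolding Kr_expand scaleR_conv_of_real by (simp only: mult_ac times_divide_eq_left times_divide_eq_right)
    also have "\<dots> = (\<Sum>k\<in>box_set v. \<Sum>j\<in>box_set v. zz k lam * cnj (zz j lam) * ee (k - j) \<theta> * (?i * h \<theta>)) / ?V"
      by (simp only: sum_distrib_right)
    also have "\<dots> = (\<Sum>k\<in>box_set v. \<Sum>j\<in>box_set v. zz k lam * cnj (zz j lam) * (indicator cube \<theta> *\<^sub>R (ee (k - j) \<theta> * h \<theta>))) / ?V"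
      by (intro arg_cong2[where f="(/)"] sum.cong refl) (simp add: scaleR_conv_of_real mult_ac)
    finally show ?thesis .
  qed
  have int: "integrable lborel (\<lambda>\<theta>. indicator cube \<theta> *\<^sub>R (ee (k - j) \<theta> * h \<theta>))" for k j
    by (rule Jc_integrable) (intro continuous_intros h)
  have "Jc (\<lambda>\<theta>. complex_of_real (Kr v lam \<theta>) * h \<theta>) = integral\<^sup>L lborel (\<lambda>\<theta>.
     (\<Sum>k\<in>box_set v. \<Sum>j\<in>box_set v. zz k lam * cnj (zz j lam) * (indicator cube \<theta> *\<^sub>R (ee (k - j) \<theta> * h \<theta>))) / ?V)"
    unfolding Jc_def by (rule arg_cong[where f="integral\<^sup>L lborel"], rule ext, rule pw)
  also have "\<dots> = integral\<^sup>L lborel (\<lambda>\<theta>.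
     (\<Sum>k\<in>box_set v. \<Sum>j\<in>box_set v. zz k lam * cnj (zz j lam) * (indicator cube \<theta> *\<^sub>R (ee (k - j) \<theta> * h \<theta>)))) / ?V"
    by (rule integral_divide_zero)
  also have "\<dots> = (\<Sum>k\<in>box_set v. \<Sum>j\<in>box_set v. zz k lam * cnj (zz j lam) * Jc (\<lambda>\<theta>. ee (k - j) \<theta> * h \<theta>)) / ?V"
    unfolding Jc_def by (subst integral_double_sum[OF int]) (rule refl)
  finally show ?thesis .
qed

lemma Jc_ee: "Jc (ee m) = complex_of_real (if m = 0 then (2*pi) ^ CARD('d) else 0)"
  for m :: "int^'d::finite"
  using cube_orth[of m] by (simp add: Jc_def ee_def set_lebesgue_integral_def)

lemma zz_norm: "zz k lam * cnj (zz k lam) = 1"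
proof -
  have "cnj (zz k lam) = exp (\<i> * complex_of_real (ldot k lam))" by (simp add: exp_cnj)
  then show ?thesis by (simp add: exp_add[symmetric])
qed

lemma zz_norm': "exp (- (\<i> * complex_of_real x)) * cnj (exp (- (\<i> * complex_of_real x))) = 1"
  using zz_norm[of 0 "\<chi> i. x"] by (simp add: exp_cnj exp_add[symmetric])

lemma Jc_Kr_ee:
  fixes m :: "int^'d::finite"
  shows "Jc (\<lambda>\<theta>. complex_of_real (Kr v lam \<theta>) * ee m \<theta>) =
    (\<Sum>k\<in>box_set v. \<Sum>j\<in>box_set v. if j = k + m then zz k lam * cnj (zz j lam) * complex_of_real ((2*pi) ^ CARD('d)) else 0)
      / complex_of_real (real (\<Prod>j\<in>UNIV. v $ j))"
proof -
  have e: "(\<lambda>\<theta>. ee (k - j) \<theta> * ee m \<theta>) = ee (k - j + m)" for k j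
    by (simp add: ee_add fun_eq_iff)
  have c: "(k - j + m = 0) = (j = k + m)" for k j :: "int^'d"
    by (auto simp: algebra_simps)
  have J: "Jc (\<lambda>\<theta>. ee (k - j) \<theta> * ee m \<theta>) = complex_of_real (if j = k + m then (2*pi) ^ CARD('d) else 0)" for k j
    unfolding e Jc_ee c by simp
  have "Jc (\<lambda>\<theta>. complex_of_real (Kr v lam \<theta>) * ee m \<theta>) =
    (\<Sum>k\<in>box_set v. \<Sum>j\<in>box_set v. zz k lam * cnj (zz j lam) * Jc (\<lambda>\<theta>. ee (k - j) \<theta> * ee m \<theta>))
      / complex_of_real (real (\<Prod>j\<in>UNIV. v $ j))"
    by (rule Jc_Kr) (rule continuous_on_ee, rule continuous_on_id)
  also have "\<dots> = (\<Sum>k\<in>box_set v. \<Sum>j\<in>box_set v. if j = k + m then zz k lam * cnj (zz j lam) * complex_of_real ((2*pi) ^ CARD('d)) else 0)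
      / complex_of_real (real (\<Prod>j\<in>UNIV. v $ j))"
    unfolding J by (simp only: if_distrib mult_zero_right of_real_0)
  finally show ?thesis .
qed

lemma prod_V_pos: fixes v :: "nat^'d::finite" assumes "\<forall>j. 1 \<le> v $ j" shows "0 < (\<Prod>j\<in>UNIV. v $ j)"
proof (rule prod_pos)
  fix j show "0 < v $ j" using assms[rule_format, of j] by simp
qed

lemma Jc_Kr_1:
  fixes v :: "nat^'d::finite"
  assumes v: "\<forall>j. 1 \<le> v $ j"
  shows "Jc (\<lambda>\<theta>. complex_of_real (Kr v lam \<theta>)) = complex_of_real ((2*pi) ^ CARD('d))"
proof -
  have "Jc (\<lambda>\<theta>. complex_of_real (Kr v lam \<theta>)) = Jc (\<lambda>\<theta>. complex_of_real (Kr v lam \<theta>) * ee 0 \<theta>)"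
    by (simp add: ee_def ldot_def)
  also have "\<dots> = (\<Sum>k\<in>box_set v. complex_of_real ((2*pi) ^ CARD('d))) / complex_of_real (real (\<Prod>j\<in>UNIV. v $ j))"
    unfolding Jc_Kr_ee by (simp add: finite_box_set zz_norm' mult.assoc[symmetric])
  also have "\<dots> = complex_of_real ((2*pi) ^ CARD('d))"
    using prod_V_pos[OF v] by (simp add: card_box_set)
  finally show ?thesis .
qed



lemma ldot_axis: "ldot (axis u 1) \<theta> = \<theta> $ u" for \<theta> :: "real^'d::finite"
proof -
  have "real_of_int ((axis u 1::int^'d) $ i) * \<theta> $ i = (if i = u then \<theta> $ u else 0)" for i
    by (simp add: axis_def)
  then show ?thesis unfolding ldot_def by simp
qed

lemma box_shift_eq: "{k\<in>box_set v. k + axis u 1 \<in> box_set v} =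
   {w. \<forall>j. w $ j \<in> (if j = u then {1..int (v $ u) - 1} else {1..int (v $ j)})}"
  for v :: "nat^'d::finite"
proof -
  have comp: "(k + axis u 1) $ j = k $ j + (if j = u then 1 else 0)" for k :: "int^'d" and j
    by (simp add: axis_def)
  show ?thesis
  proof (rule set_eqI, rule iffI)
    fix x assume "x \<in> {k\<in>box_set v. k + axis u 1 \<in> box_set v}"
    then have a: "\<And>j. 1 \<le> x $ j \<and> x $ j \<le> int (v $ j)" and b: "\<And>j. 1 \<le> (x + axis u 1) $ j \<and> (x + axis u 1) $ j \<le> int (v $ j)"
      by (auto simp: box_set_def)
    show "x \<in> {w. \<forall>j. w $ j \<in> (if j = u then {1..int (v $ u) - 1} else {1..int (v $ j)})}"
    proof (clarify)
      fix j show "x $ j \<in> (if j = u then {1..int (v $ u) - 1} else {1..int (v $ j)})"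
        using a[of j] b[of j] by (auto simp: comp)
    qed
  next
    fix x assume x: "x \<in> {w. \<forall>j. w $ j \<in> (if j = u then {1..int (v $ u) - 1} else {1..int (v $ j)})}"
    have c: "x $ j \<in> (if j = u then {1..int (v $ u) - 1} else {1..int (v $ j)})" for j using x by auto
    have "1 \<le> x $ j \<and> x $ j \<le> int (v $ j)" for j using c[of j] by (auto split: if_splits)
    moreover have "1 \<le> (x + axis u 1) $ j \<and> (x + axis u 1) $ j \<le> int (v $ j)" for j using c[of j] by (auto simp: comp axis_def split: if_splits)
    ultimately show "x \<in> {k\<in>box_set v. k + axis u 1 \<in> box_set v}" by (auto simp: box_set_def)
  qed
qed

lemma card_box_shift: "card {k\<in>box_set v. k + axis u 1 \<in> box_set v} = (\<Prod>j\<in>UNIV. if j = u then v $ u - 1 else v $ j)"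
  unfolding box_shift_eq by (subst card_vecset) (auto intro!: prod.cong)

lemma Jc_Kr_axis:
  fixes v :: "nat^'d::finite"
  shows "Jc (\<lambda>\<theta>. complex_of_real (Kr v lam \<theta>) * ee (axis u 1) \<theta>) =
     complex_of_real ((2*pi) ^ CARD('d) * (real (card {k\<in>box_set v. k + axis u 1 \<in> box_set v}) / real (\<Prod>j\<in>UNIV. v $ j)))
       * exp (\<i> * complex_of_real (lam $ u))"
proof -
  let ?m = "axis u 1 :: int^'d"
  let ?c = "complex_of_real ((2*pi) ^ CARD('d))"
  let ?w = "exp (\<i> * complex_of_real (lam $ u))"
  have z: "zz k lam * cnj (zz (k + ?m) lam) = ?w" for k
    by (simp add: exp_cnj ldot_add ldot_axis exp_add[symmetric] algebra_simps)
  have "Jc (\<lambda>\<theta>. complex_of_real (Kr v lam \<theta>) * ee ?m \<theta>) =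
    (\<Sum>k\<in>box_set v. \<Sum>j\<in>box_set v. if j = k + ?m then zz k lam * cnj (zz j lam) * ?c else 0)
      / complex_of_real (real (\<Prod>j\<in>UNIV. v $ j))"
    by (rule Jc_Kr_ee)
  also have "\<dots> = (\<Sum>k\<in>box_set v. if k + ?m \<in> box_set v then ?w * ?c else 0) / complex_of_real (real (\<Prod>j\<in>UNIV. v $ j))"
    by (simp only: sum.delta[OF finite_box_set] z)
  also have "\<dots> = (\<Sum>k\<in>{k\<in>box_set v. k + ?m \<in> box_set v}. ?w * ?c) / complex_of_real (real (\<Prod>j\<in>UNIV. v $ j))"
    by (simp only: sum.inter_filter[OF finite_box_set])
  also have "\<dots> = complex_of_real ((2*pi) ^ CARD('d) * (real (card {k\<in>box_set v. k + ?m \<in> box_set v}) / real (\<Prod>j\<in>UNIV. v $ j))) * ?w"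
    by simp
  finally show ?thesis .
qed

lemma Jr_Re:
  fixes H :: "real^'d::finite \<Rightarrow> complex"
  assumes "continuous_on UNIV H"
  shows "Jr (\<lambda>\<theta>. Re (H \<theta>)) = Re (Jc H)"
proof -
  have "Jr (\<lambda>\<theta>. Re (H \<theta>)) = integral\<^sup>L lborel (\<lambda>\<theta>. Re (indicator cube \<theta> *\<^sub>R H \<theta>))"
    unfolding Jr_def by simp
  also have "\<dots> = Re (Jc H)"
    unfolding Jc_def by (rule integral_Re[OF Jc_integrable[OF assms]])
  finally show ?thesis .
qed

lemma Jr_Kr_1:
  fixes v :: "nat^'d::finite"
  assumes v: "\<forall>j. 1 \<le> v $ j"
  shows "Jr (Kr v lam) = (2*pi) ^ CARD('d)"
proof -
  have "Jr (Kr v lam) = Jr (\<lambda>\<theta>. Re (complex_of_real (Kr v lam \<theta>)))" by simp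
  also have "\<dots> = Re (Jc (\<lambda>\<theta>. complex_of_real (Kr v lam \<theta>)))"
    by (rule Jr_Re) (intro continuous_intros)
  also have "\<dots> = (2*pi) ^ CARD('d)" using Jc_Kr_1[OF v] by simp
  finally show ?thesis .
qed

lemma card_ratio:
  fixes v :: "nat^'d::finite"
  assumes v: "\<forall>j. 1 \<le> v $ j"
  shows "real (card {k\<in>box_set v. k + axis u 1 \<in> box_set v}) / real (\<Prod>j\<in>UNIV. v $ j) = 1 - 1 / real (v $ u)"
proof -
  let ?P = "\<Prod>j\<in>UNIV - {u}. v $ j"
  have P: "0 < ?P" using v by (intro prod_pos) (metis One_nat_def Suc_le_eq)
  have vu: "1 \<le> v $ u" using v by auto
  have "(\<Prod>j\<in>UNIV. if j = u then v $ u - 1 else v $ j) = (v $ u - 1) * ?P"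
    by (subst prod.remove[of UNIV u]) (auto intro!: prod.cong)
  moreover have "(\<Prod>j\<in>UNIV. v $ j) = v $ u * ?P"
    by (subst prod.remove[of UNIV u]) auto
  ultimately show ?thesis
    using P vu unfolding card_box_shift by (simp add: of_nat_diff field_simps)
qed

lemma Jr_Kr_cos:
  fixes v :: "nat^'d::finite"
  assumes v: "\<forall>j. 1 \<le> v $ j"
  shows "Jr (\<lambda>\<theta>. Kr v lam \<theta> * cos (\<theta> $ u - lam $ u)) = (2*pi) ^ CARD('d) * (1 - 1 / real (v $ u))"
proof -
  let ?w = "exp (- \<i> * complex_of_real (lam $ u))"
  have pw: "Kr v lam \<theta> * cos (\<theta> $ u - lam $ u) = Re (complex_of_real (Kr v lam \<theta>) * ee (axis u 1) \<theta> * ?w)" for \<theta>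
  proof -
    have "ee (axis u 1) \<theta> * ?w = exp (\<i> * complex_of_real (\<theta> $ u - lam $ u))"
      by (simp add: ee_def ldot_axis exp_add[symmetric] algebra_simps)
    then show ?thesis by (simp add: mult.assoc Re_exp)
  qed
  have "Jr (\<lambda>\<theta>. Kr v lam \<theta> * cos (\<theta> $ u - lam $ u)) = Re (Jc (\<lambda>\<theta>. complex_of_real (Kr v lam \<theta>) * ee (axis u 1) \<theta> * ?w))"
    unfolding pw by (rule Jr_Re) (intro continuous_intros)
  also have "Jc (\<lambda>\<theta>. complex_of_real (Kr v lam \<theta>) * ee (axis u 1) \<theta> * ?w) = Jc (\<lambda>\<theta>. complex_of_real (Kr v lam \<theta>) * ee (axis u 1) \<theta>) * ?w"
    unfolding Jc_def by (simp add: scaleR_conv_of_real mult.assoc[symmetric])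
  also have "\<dots> = complex_of_real ((2*pi) ^ CARD('d) * (1 - 1 / real (v $ u)))"
  proof -
    have w1: "exp (\<i> * complex_of_real (lam $ u)) * ?w = 1" by (simp add: exp_add[symmetric])
    show ?thesis unfolding Jc_Kr_axis card_ratio[OF v] by (simp only: mult.assoc w1 mult_1_right)
  qed
  finally show ?thesis by simp
qed



lemma torus_pt_in: "torus_pt \<theta> \<in> torus"
  by (simp add: torus_def torus_pt_def norm_exp_eq_Re)

lemma continuous_on_torus_pt[continuous_intros]: "continuous_on S (torus_pt :: real^'d::finite \<Rightarrow> complex^'d)"
  unfolding torus_pt_def by (intro continuous_intros continuous_on_vec_lambda) 

lemma compact_torus: "compact (torus :: (complex^'d::finite) set)"
proof -
  have "torus = (\<Inter>i. {z::complex^'d. norm (z $ i) = 1})" by (auto simp: torus_def)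
  moreover have "closed (\<Inter>i. {z::complex^'d. norm (z $ i) = 1})"
    by (intro closed_INT ballI closed_Collect_eq continuous_intros continuous_on_component continuous_on_id)
  ultimately have c: "closed (torus :: (complex^'d) set)" by simp
  have "bounded (torus :: (complex^'d) set)"
  proof (rule boundedI)
    fix z :: "complex^'d" assume "z \<in> torus"
    have "norm z \<le> (\<Sum>i\<in>UNIV. norm (z $ i))" unfolding norm_vec_def by (rule L2_set_le_sum) simp
    also have "\<dots> = real CARD('d)" using \<open>z \<in> torus\<close> by (simp add: torus_def)
    finally show "norm z \<le> real CARD('d)" .
  qed
  with c show ?thesis by (simp add: compact_eq_bounded_closed)
qed

lemma cmod_cis_diff: "(cmod (exp (\<i> * complex_of_real a) - exp (\<i> * complex_of_real b)))\<^sup>2 = 2 - 2 * cos (a - b)"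
proof -
  have "(cmod (cis a - cis b))\<^sup>2 = (cos a - cos b)\<^sup>2 + (sin a - sin b)\<^sup>2"
    by (simp add: cmod_power2)
  also have "\<dots> = (sin a ^ 2 + cos a ^ 2) + (sin b ^ 2 + cos b ^ 2) - 2 * (cos a * cos b + sin a * sin b)"
    by (simp add: power2_eq_square algebra_simps)
  also have "\<dots> = 2 - 2 * cos (a - b)" by (simp add: cos_diff)
  finally show ?thesis by (simp add: cis_conv_exp)
qed

lemma dist_torus_pt: "(dist (torus_pt \<theta>) (torus_pt lam))\<^sup>2 = (\<Sum>u\<in>UNIV. 2 - 2 * cos (\<theta> $ u - lam $ u))"
  for \<theta> lam :: "real^'d::finite"
proof -
  have "(dist (torus_pt \<theta>) (torus_pt lam))\<^sup>2 = (\<Sum>u\<in>UNIV. (dist (torus_pt \<theta> $ u) (torus_pt lam $ u))\<^sup>2)"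
    unfolding dist_vec_def L2_set_def by (simp add: sum_nonneg)
  also have "\<dots> = (\<Sum>u\<in>UNIV. 2 - 2 * cos (\<theta> $ u - lam $ u))"
    by (simp add: torus_pt_def dist_norm cmod_cis_diff)
  finally show ?thesis .
qed

lemma Jc_of_real: "Jc (\<lambda>\<theta>. complex_of_real (H \<theta>)) = complex_of_real (Jr H)"
  unfolding Jc_def Jr_def scaleR_conv_of_real of_real_mult[symmetric] by (rule integral_complex_of_real)

lemma expect_formula:
  fixes M :: "'a measure" and X :: "int^'d::finite \<Rightarrow> 'a \<Rightarrow> complex" and f :: "complex^'d \<Rightarrow> real"
  assumes ws: "weakly_stationary M X" and sd: "spectral_density M X f"
    and gc: "continuous_on UNIV (\<lambda>\<theta>. f (torus_pt \<theta>))"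
  shows "integral\<^sup>L M (periodogram X v lam) = Jr (\<lambda>\<theta>. Kr v lam \<theta> * f (torus_pt \<theta>)) / (2*pi) ^ CARD('d)"
proof -
  let ?V = "complex_of_real (real (\<Prod>j\<in>UNIV. v $ j))"
  let ?c = "complex_of_real ((2*pi) ^ CARD('d))"
  let ?S = "\<lambda>\<omega>. \<Sum>k\<in>box_set v. zz k lam * X k \<omega>"
  have meas: "\<And>k. X k \<in> borel_measurable M" and sq: "\<And>k. integrable M (\<lambda>\<omega>. (cmod (X k \<omega>))\<^sup>2)"
    using ws by (auto simp: weakly_stationary_def)
  have int: "integrable M (\<lambda>\<omega>. X k \<omega> * cnj (X j \<omega>))" for k j
  proof (rule Bochner_Integration.integrable_bound)
    show "integrable M (\<lambda>\<omega>. (cmod (X k \<omega>))\<^sup>2 + (cmod (X j \<omega>))\<^sup>2)" using sq by simp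
    have cm: "(\<lambda>\<omega>. cnj (X j \<omega>)) \<in> borel_measurable M"
      using measurable_compose[OF meas[of j] borel_measurable_continuous_onI[OF continuous_on_cnj[OF continuous_on_id]]]
      by (simp add: comp_def)
    show "(\<lambda>\<omega>. X k \<omega> * cnj (X j \<omega>)) \<in> borel_measurable M" by (intro borel_measurable_times meas cm)
    show "AE \<omega> in M. norm (X k \<omega> * cnj (X j \<omega>)) \<le> norm ((cmod (X k \<omega>))\<^sup>2 + (cmod (X j \<omega>))\<^sup>2)"
    proof (rule AE_I2)
      fix \<omega>
      have "0 \<le> (cmod (X k \<omega>) - cmod (X j \<omega>))\<^sup>2" by simp
      then have "cmod (X k \<omega>) * cmod (X j \<omega>) \<le> (cmod (X k \<omega>))\<^sup>2 + (cmod (X j \<omega>))\<^sup>2"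
        by (simp add: power2_eq_square algebra_simps) (smt (verit) mult_nonneg_nonneg norm_ge_zero)
      then show "norm (X k \<omega> * cnj (X j \<omega>)) \<le> norm ((cmod (X k \<omega>))\<^sup>2 + (cmod (X j \<omega>))\<^sup>2)"
        by (simp add: norm_mult)
    qed
  qed
  have cov: "integral\<^sup>L M (\<lambda>\<omega>. X k \<omega> * cnj (X j \<omega>)) = Jc (\<lambda>\<theta>. ee (k - j) \<theta> * complex_of_real (f (torus_pt \<theta>))) / ?c" for k j
    using sd unfolding spectral_density_def Jc_def ee_def set_lebesgue_integral_def by blast
  have SS: "complex_of_real ((cmod (?S \<omega>))\<^sup>2) = (\<Sum>k\<in>box_set v. \<Sum>j\<in>box_set v. zz k lam * cnj (zz j lam) * (X k \<omega> * cnj (X j \<omega>)))" for \<omega>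
  proof -
    have "complex_of_real ((cmod (?S \<omega>))\<^sup>2) = ?S \<omega> * cnj (?S \<omega>)" by (rule complex_norm_square)
    also have "\<dots> = (\<Sum>k\<in>box_set v. \<Sum>j\<in>box_set v. zz k lam * X k \<omega> * cnj (zz j lam * X j \<omega>))"
      by (simp only: sum_product cnj_sum)
    also have "\<dots> = (\<Sum>k\<in>box_set v. \<Sum>j\<in>box_set v. zz k lam * cnj (zz j lam) * (X k \<omega> * cnj (X j \<omega>)))"
      by (intro sum.cong refl) (simp add: mult_ac)
    finally show ?thesis .
  qed
  have "complex_of_real (integral\<^sup>L M (periodogram X v lam)) = integral\<^sup>L M (\<lambda>\<omega>. complex_of_real ((cmod (?S \<omega>))\<^sup>2) / ?V)"
    unfolding integral_complex_of_real[symmetric] periodogram_def by simp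
  also have "\<dots> = integral\<^sup>L M (\<lambda>\<omega>. complex_of_real ((cmod (?S \<omega>))\<^sup>2)) / ?V"
    by (rule integral_divide_zero)
  also have "\<dots> = (\<Sum>k\<in>box_set v. \<Sum>j\<in>box_set v. zz k lam * cnj (zz j lam) * integral\<^sup>L M (\<lambda>\<omega>. X k \<omega> * cnj (X j \<omega>))) / ?V"
    unfolding SS by (subst integral_double_sum[OF int]) (rule refl)
  also have "\<dots> = (\<Sum>k\<in>box_set v. \<Sum>j\<in>box_set v. zz k lam * cnj (zz j lam) * Jc (\<lambda>\<theta>. ee (k - j) \<theta> * complex_of_real (f (torus_pt \<theta>)))) / ?V / ?c"
    unfolding cov by (simp only: times_divide_eq_right sum_divide_distrib[symmetric] divide_divide_eq_left mult.commute)
  also have "\<dots> = Jc (\<lambda>\<theta>. complex_of_real (Kr v lam \<theta>) * complex_of_real (f (torus_pt \<theta>))) / ?c"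
    by (subst Jc_Kr) (intro continuous_intros gc, rule refl)
  also have "\<dots> = complex_of_real (Jr (\<lambda>\<theta>. Kr v lam \<theta> * f (torus_pt \<theta>)) / (2*pi) ^ CARD('d))"
    unfolding of_real_mult[symmetric] Jc_of_real by simp
  finally show ?thesis by (simp only: of_real_eq_iff)
qed



lemma Jr_add: "continuous_on UNIV H \<Longrightarrow> continuous_on UNIV G \<Longrightarrow> Jr (\<lambda>\<theta>. H \<theta> + G \<theta>) = Jr H + Jr G"
  for H G :: "real^'d::finite \<Rightarrow> real"
  unfolding Jr_def distrib_left by (rule Bochner_Integration.integral_add[OF Jr_integrable Jr_integrable])

lemma Jr_diff: "continuous_on UNIV H \<Longrightarrow> continuous_on UNIV G \<Longrightarrow> Jr (\<lambda>\<theta>. H \<theta> - G \<theta>) = Jr H - Jr G"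
  for H G :: "real^'d::finite \<Rightarrow> real"
  unfolding Jr_def right_diff_distrib by (rule Bochner_Integration.integral_diff[OF Jr_integrable Jr_integrable])

lemma Jr_cmult: "Jr (\<lambda>\<theta>. a * H \<theta>) = a * Jr H"
  for H :: "real^'d::finite \<Rightarrow> real"
proof -
  have "(\<lambda>\<theta>. indicator cube \<theta> * (a * H \<theta>)) = (\<lambda>\<theta>. a * (indicator cube \<theta> * H \<theta>))" by (simp add: mult_ac)
  then show ?thesis unfolding Jr_def by simp
qed

lemma Jr_sum: "(\<And>u. continuous_on UNIV (H u)) \<Longrightarrow> Jr (\<lambda>\<theta>. \<Sum>u\<in>A. H u \<theta>) = (\<Sum>u\<in>A. Jr (H u))"
  for H :: "'i \<Rightarrow> real^'d::finite \<Rightarrow> real"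
  unfolding Jr_def sum_distrib_left by (rule Bochner_Integration.integral_sum[OF Jr_integrable])

lemma Jr_abs_bound:
  fixes H G :: "real^'d::finite \<Rightarrow> real"
  assumes "continuous_on UNIV H" "continuous_on UNIV G" "\<And>\<theta>. \<bar>H \<theta>\<bar> \<le> G \<theta>"
  shows "\<bar>Jr H\<bar> \<le> Jr G"
  unfolding Jr_def
proof (rule integral_abs_bound_integral[OF Jr_integrable[OF assms(1)] Jr_integrable[OF assms(2)]])
  fix \<theta> show "\<bar>indicator cube \<theta> * H \<theta>\<bar> \<le> indicator cube \<theta> * G \<theta>"
    using assms(3)[of \<theta>] by (auto simp: indicator_def abs_mult)
qed

lemma Kr_nonneg: "0 \<le> Kr v lam \<theta>"
  unfolding Kr_def by (rule divide_nonneg_nonneg) (simp_all add: prod_nonneg)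

lemma main_est:
  fixes g :: "real^'d::finite \<Rightarrow> real" and v :: "nat^'d"
  assumes v: "\<forall>j. 1 \<le> v $ j" and gc: "continuous_on UNIV g" and C: "0 \<le> C"
    and bnd: "\<And>\<theta>. \<bar>g \<theta> - g lam\<bar> \<le> e + C * (\<Sum>u\<in>UNIV. 2 - 2 * cos (\<theta> $ u - lam $ u))"
  shows "\<bar>Jr (\<lambda>\<theta>. Kr v lam \<theta> * g \<theta>) / (2*pi) ^ CARD('d) - g lam\<bar> \<le> e + C * (\<Sum>u\<in>UNIV. 2 / real (v $ u))"
proof -
  let ?c = "(2*pi) ^ CARD('d) :: real"
  have c: "0 < ?c" by simp
  have cK: "continuous_on UNIV (Kr v lam)" by (intro continuous_intros)
  have cos_c: "continuous_on UNIV (\<lambda>\<theta>::real^'d. cos (\<theta> $ u - lam $ u))" for u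
    by (intro continuous_intros continuous_on_component continuous_on_id)
  have "Jr (\<lambda>\<theta>. Kr v lam \<theta> * (g \<theta> - g lam)) = Jr (\<lambda>\<theta>. Kr v lam \<theta> * g \<theta>) - Jr (\<lambda>\<theta>. g lam * Kr v lam \<theta>)"
    unfolding right_diff_distrib by (subst Jr_diff[symmetric]) (auto intro!: continuous_intros gc simp: mult_ac)
  also have "\<dots> = Jr (\<lambda>\<theta>. Kr v lam \<theta> * g \<theta>) - g lam * ?c"
    by (simp add: Jr_cmult Jr_Kr_1[OF v])
  finally have eq1: "Jr (\<lambda>\<theta>. Kr v lam \<theta> * (g \<theta> - g lam)) = Jr (\<lambda>\<theta>. Kr v lam \<theta> * g \<theta>) - g lam * ?c" .
  let ?D = "\<lambda>\<theta>::real^'d. \<Sum>u\<in>UNIV. 2 - 2 * cos (\<theta> $ u - lam $ u)"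
  have "\<bar>Jr (\<lambda>\<theta>. Kr v lam \<theta> * (g \<theta> - g lam))\<bar> \<le> Jr (\<lambda>\<theta>. Kr v lam \<theta> * (e + C * ?D \<theta>))"
  proof (rule Jr_abs_bound)
    show "continuous_on UNIV (\<lambda>\<theta>. Kr v lam \<theta> * (g \<theta> - g lam))" by (intro continuous_intros gc)
    show "continuous_on UNIV (\<lambda>\<theta>. Kr v lam \<theta> * (e + C * ?D \<theta>))" by (intro continuous_intros cos_c)
    fix \<theta>
    show "\<bar>Kr v lam \<theta> * (g \<theta> - g lam)\<bar> \<le> Kr v lam \<theta> * (e + C * ?D \<theta>)"
      unfolding abs_mult using Kr_nonneg[of v lam \<theta>] bnd[of \<theta>] by (simp add: mult_left_mono)
  qed
  also have "Jr (\<lambda>\<theta>. Kr v lam \<theta> * (e + C * ?D \<theta>)) =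
     Jr (\<lambda>\<theta>. e * Kr v lam \<theta> + C * (\<Sum>u\<in>UNIV. 2 * Kr v lam \<theta> - 2 * (Kr v lam \<theta> * cos (\<theta> $ u - lam $ u))))"
    by (simp add: algebra_simps sum_distrib_left)
  also have "\<dots> = e * Jr (Kr v lam) + C * (\<Sum>u\<in>UNIV. 2 * Jr (Kr v lam) - 2 * Jr (\<lambda>\<theta>. Kr v lam \<theta> * cos (\<theta> $ u - lam $ u)))"
    apply (subst Jr_add)
      apply (intro continuous_intros cos_c)+
    apply (simp only: Jr_cmult)
    apply (subst Jr_sum)
     apply (intro continuous_intros cos_c)
    apply (intro arg_cong2[where f="(+)"] refl arg_cong2[where f="(*)"] sum.cong)
    apply (subst Jr_diff)
      apply (intro continuous_intros cos_c)+
    apply (simp only: Jr_cmult)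
    done
  also have "\<dots> = ?c * (e + C * (\<Sum>u\<in>UNIV. 2 / real (v $ u)))"
    by (simp add: Jr_Kr_1[OF v] Jr_Kr_cos[OF v] algebra_simps sum_distrib_left)
  finally have "\<bar>Jr (\<lambda>\<theta>. Kr v lam \<theta> * g \<theta>) - g lam * ?c\<bar> \<le> ?c * (e + C * (\<Sum>u\<in>UNIV. 2 / real (v $ u)))"
    unfolding eq1 .
  moreover have "Jr (\<lambda>\<theta>. Kr v lam \<theta> * g \<theta>) / ?c - g lam = (Jr (\<lambda>\<theta>. Kr v lam \<theta> * g \<theta>) - g lam * ?c) / ?c"
    using c by (simp add: field_simps)
  ultimately show ?thesis using c by (simp add: pos_divide_le_eq mult.commute)
qed



theorem theorem2p1:
  fixes M :: "'a measure" and X :: "int^'d \<Rightarrow> 'a \<Rightarrow> complex"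
    and f :: "complex^'d \<Rightarrow> real" and v :: "nat \<Rightarrow> nat^'d"
  assumes "prob_space M"
    and "centered M X"
    and "weakly_stationary M X"
    and "(\<lambda>n. rho' M X n) \<longlonglongrightarrow> 0"
    and "spectral_density M X f"
    and "continuous_on torus f"
    and "\<forall>n j. 1 \<le> v n $ j"
    and "filterlim (\<lambda>n. Min (range (\<lambda>j. v n $ j))) at_top sequentially"
  shows "(\<forall>lam\<in>{lam. \<forall>i. - pi < lam $ i \<and> lam $ i \<le> pi}.
            (\<lambda>n. integral\<^sup>L M (periodogram X (v n) lam)) \<longlonglongrightarrow> f (torus_pt lam))
       \<and> uniform_limit {lam. \<forall>i. - pi < lam $ i \<and> lam $ i \<le> pi}
            (\<lambda>n lam. integral\<^sup>L M (periodogram X (v n) lam)) (\<lambda>lam. f (torus_pt lam)) sequentially"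
proof -
  note ws = assms(3) and sd = assms(5) and fc = assms(6) and v = assms(7) and vlim = assms(8)
  define g where "g \<theta> = f (torus_pt \<theta>)" for \<theta> :: "real^'d"
  have gc: "continuous_on UNIV g"
    unfolding g_def by (rule continuous_on_compose2[OF fc continuous_on_torus_pt]) (auto simp: torus_pt_in)
  have E: "integral\<^sup>L M (periodogram X (v n) lam) = Jr (\<lambda>\<theta>. Kr (v n) lam \<theta> * g \<theta>) / (2*pi) ^ CARD('d)" for n lam
    unfolding g_def by (rule expect_formula[OF ws sd gc[unfolded g_def]])
  obtain B where B: "\<And>z. z \<in> torus \<Longrightarrow> \<bar>f z\<bar> \<le> B"
    using compact_imp_bounded[OF compact_continuous_image[OF fc compact_torus]]
    unfolding bounded_iff by auto
  define Mg where "Mg = max B 0"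
  have Mg0: "0 \<le> Mg" by (simp add: Mg_def)
  have gB: "\<bar>g \<theta>\<bar> \<le> Mg" for \<theta>
    using B[OF torus_pt_in[of \<theta>]] by (simp add: Mg_def g_def le_max_iff_disj)
  have uc: "uniformly_continuous_on torus f"
    by (rule compact_uniformly_continuous[OF fc compact_torus])
  have key: "\<forall>\<^sub>F n in sequentially. \<forall>lam. \<bar>integral\<^sup>L M (periodogram X (v n) lam) - g lam\<bar> < \<epsilon>"
    if \<epsilon>: "\<epsilon> > 0" for \<epsilon>
  proof -
    obtain \<delta> where \<delta>: "\<delta> > 0" and d: "\<And>x x'. x \<in> torus \<Longrightarrow> x' \<in> torus \<Longrightarrow> dist x' x < \<delta> \<Longrightarrow> dist (f x') (f x) < \<epsilon> / 2"
      using uc \<epsilon> unfolding uniformly_continuous_on_def by (metis half_gt_zero)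
    define C where "C = 2 * Mg / \<delta>\<^sup>2"
    have C0: "0 \<le> C" using Mg0 \<delta> by (simp add: C_def)
    have bnd: "\<bar>g \<theta> - g lam\<bar> \<le> \<epsilon> / 2 + C * (\<Sum>u\<in>UNIV. 2 - 2 * cos (\<theta> $ u - lam $ u))" for \<theta> lam
    proof -
      have D: "(\<Sum>u\<in>UNIV. 2 - 2 * cos (\<theta> $ u - lam $ u)) = (dist (torus_pt \<theta>) (torus_pt lam))\<^sup>2"
        by (rule dist_torus_pt[symmetric])
      show ?thesis
      proof (cases "dist (torus_pt \<theta>) (torus_pt lam) < \<delta>")
        case True
        then have "\<bar>g \<theta> - g lam\<bar> < \<epsilon> / 2"
          using d[OF torus_pt_in torus_pt_in, of lam \<theta>] by (simp add: g_def dist_real_def dist_commute abs_minus_commute)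
        moreover have "0 \<le> C * (\<Sum>u\<in>UNIV. 2 - 2 * cos (\<theta> $ u - lam $ u))" unfolding D using C0 by simp
        ultimately show ?thesis by simp
      next
        case False
        then have "\<delta>\<^sup>2 \<le> (dist (torus_pt \<theta>) (torus_pt lam))\<^sup>2"
          using \<delta> by (intro power_mono) auto
        then have "C * \<delta>\<^sup>2 \<le> C * (\<Sum>u\<in>UNIV. 2 - 2 * cos (\<theta> $ u - lam $ u))"
          unfolding D using C0 by (rule mult_left_mono)
        moreover have "C * \<delta>\<^sup>2 = 2 * Mg" using \<delta> by (simp add: C_def)
        moreover have "\<bar>g \<theta> - g lam\<bar> \<le> 2 * Mg" using gB[of \<theta>] gB[of lam] by simp
        ultimately show ?thesis using \<epsilon> by simp
      qed
    qed
    define m where "m n = Min (range (\<lambda>j. v n $ j))" for n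
    have m1: "1 \<le> m n" for n
      unfolding m_def using v by (subst Min_ge_iff) auto
    have mle: "m n \<le> v n $ u" for n u
      unfolding m_def by (rule Min_le) auto
    define K :: nat where "K = nat \<lceil>4 * real CARD('d) * C / \<epsilon>\<rceil> + 1"
    have K: "4 * real CARD('d) * C / \<epsilon> < real K" unfolding K_def by linarith
    have ev: "\<forall>\<^sub>F n in sequentially. K \<le> m n"
      using vlim unfolding m_def filterlim_at_top by auto
    show ?thesis
      using ev
    proof (rule eventually_mono)
      fix n assume Kn: "K \<le> m n"
      have sumb: "(\<Sum>u\<in>UNIV. 2 / real (v n $ u)) \<le> real CARD('d) * (2 / real (m n))"
      proof -
        have "(\<Sum>u\<in>UNIV. 2 / real (v n $ u)) \<le> (\<Sum>u\<in>(UNIV::'d set). 2 / real (m n))"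
        proof (rule sum_mono)
          fix u show "2 / real (v n $ u) \<le> 2 / real (m n)"
            using m1[of n] mle[of n u] by (intro divide_left_mono) auto
        qed
        then show ?thesis by simp
      qed
      have Kpos: "0 < real K" unfolding K_def by simp
      have "C * (real CARD('d) * (2 / real (m n))) \<le> C * (real CARD('d) * (2 / real K))"
        using C0 Kn Kpos by (intro mult_left_mono divide_left_mono) auto
      also have "\<dots> < \<epsilon> / 2"
      proof -
        have "4 * real CARD('d) * C < \<epsilon> * real K" using K \<epsilon> by (simp add: pos_divide_less_eq mult.commute)
        then show ?thesis using Kpos by (simp add: field_simps)
      qed
      finally have small: "C * (real CARD('d) * (2 / real (m n))) < \<epsilon> / 2" .
      show "\<forall>lam. \<bar>integral\<^sup>L M (periodogram X (v n) lam) - g lam\<bar> < \<epsilon>"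
      proof
        fix lam
        have "\<bar>integral\<^sup>L M (periodogram X (v n) lam) - g lam\<bar> \<le> \<epsilon> / 2 + C * (\<Sum>u\<in>UNIV. 2 / real (v n $ u))"
          unfolding E by (rule main_est[OF _ gc C0 bnd]) (use v in auto)
        also have "\<dots> \<le> \<epsilon> / 2 + C * (real CARD('d) * (2 / real (m n)))"
          using mult_left_mono[OF sumb C0] by simp
        finally show "\<bar>integral\<^sup>L M (periodogram X (v n) lam) - g lam\<bar> < \<epsilon>" using small by simp
      qed
    qed
  qed
  have U: "uniform_limit S (\<lambda>n lam. integral\<^sup>L M (periodogram X (v n) lam)) g sequentially" for S
    unfolding uniform_limit_iff dist_real_def
    by (auto intro: eventually_mono[OF key])
  show ?thesis
  proof
    show "\<forall>lam\<in>{lam. \<forall>i. - pi < lam $ i \<and> lam $ i \<le> pi}.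
            (\<lambda>n. integral\<^sup>L M (periodogram X (v n) lam)) \<longlonglongrightarrow> f (torus_pt lam)"
    proof
      fix lam :: "real^'d"
      show "(\<lambda>n. integral\<^sup>L M (periodogram X (v n) lam)) \<longlonglongrightarrow> f (torus_pt lam)"
        unfolding tendsto_iff dist_real_def g_def[symmetric]
        by (auto intro: eventually_mono[OF key])
    qed
    show "uniform_limit {lam. \<forall>i. - pi < lam $ i \<and> lam $ i \<le> pi}
            (\<lambda>n lam. integral\<^sup>L M (periodogram X (v n) lam)) (\<lambda>lam. f (torus_pt lam)) sequentially"
      using U unfolding g_def .
  qed
qed


end
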